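(* Let $\gamma\in C^0(\mathbb{R}/\ell\mathbb{Z},\mathbb{R}^3)$ be a closed curve of length $\Lambda\in(0,\infty)$ whose image is invariant under $R_1$, $R_2$ and $R_3$ (i.e. $R_i\gamma(\mathbb{R}/\ell\mathbb{Z})=\gamma(\mathbb{R}/\ell\mathbb{Z})$ for $i=1,2,3$). Then $\gamma(\mathbb{R}/\ell\mathbb{Z})$ is contained in the closed ball of radius $\Lambda/4$ centered at the origin.
   Context: $R_1=\mathrm{diag}(1,-1,-1)$, $R_2=\mathrm{diag}(-1,1,-1)$, $R_3=\mathrm{diag}(-1,-1,1)$ are the rotations by angle $\pi$ about the coordinate axes of $\mathbb{R}^3$. *)

theory Defs
  imports "HOL-Analysis.Analysis"
begin

text \<open>The rotations by angle pi about the coordinate axes of R^3: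
  R1 = diag(1,-1,-1), R2 = diag(-1,1,-1), R3 = diag(-1,-1,1).\<close>

definition R1 :: "real^3^3" where
  "R1 = (\<chi> i j. if i = j then (if i = 1 then 1 else -1) else 0)"

definition R2 :: "real^3^3" where
  "R2 = (\<chi> i j. if i = j then (if i = 2 then 1 else -1) else 0)"

definition R3 :: "real^3^3" where
  "R3 = (\<chi> i j. if i = j then (if i = 3 then 1 else -1) else 0)"

text \<open>Length of a (continuous) curve on [a,b]: supremum over all partitions
  a = t_0 <= t_1 <= ... <= t_n = b of the inscribed polygon lengths
  (value in ereal, so a non-rectifiable curve has length infinity).\<close>

definition curve_length :: "(real \<Rightarrow> 'a::metric_space) \<Rightarrow> real \<Rightarrow> real \<Rightarrow> ereal" where
  "curve_length g a b =
     (SUP tn \<in> {(t, n). t 0 = a \<and> t n = b \<and> (\<forall>i<n. t i \<le> t (Suc i))}.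
        ereal (\<Sum>i<snd tn. dist (g (fst tn (Suc i))) (g (fst tn i))))"

end

theory Submission
  imports Defs
begin

lemma R1v: "R1 *v x = vector [x$1, -(x$2), -(x$3)]"
  by (simp add: vec_eq_iff forall_3 matrix_vector_mult_def sum_3 R1_def vector_def)
lemma R2v: "R2 *v x = vector [-(x$1), x$2, -(x$3)]"
  by (simp add: vec_eq_iff forall_3 matrix_vector_mult_def sum_3 R2_def vector_def)
lemma nx: "norm (x::real^3) = sqrt ((x$1)^2 + (x$2)^2 + (x$3)^2)"
  by (simp add: norm_vec_def L2_set_def sum_3 power2_eq_square)

lemma sq2: "sqrt (4 * u) = 2 * sqrt u"
  by (simp add: real_sqrt_mult)

lemma d1: "dist x (R1 *v x) = 2 * sqrt ((x$2)^2 + (x$3)^2)"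
proof -
  have "dist x (R1 *v x) = sqrt (4 * ((x$2)^2 + (x$3)^2))"
    by (simp add: dist_norm nx R1v vector_def algebra_simps power2_eq_square)
  thus ?thesis by (simp only: sq2[symmetric])
qed
lemma d2: "dist x (R2 *v x) = 2 * sqrt ((x$1)^2 + (x$3)^2)"
proof -
  have "dist x (R2 *v x) = sqrt (4 * ((x$1)^2 + (x$3)^2))"
    by (simp add: dist_norm nx R2v vector_def algebra_simps power2_eq_square)
  thus ?thesis by (simp only: sq2[symmetric])
qed
lemma d3: "dist (R1 *v x) (R2 *v x) = 2 * sqrt ((x$1)^2 + (x$2)^2)"
proof -
  have "dist (R1 *v x) (R2 *v x) = sqrt (4 * ((x$1)^2 + (x$2)^2))"
    by (simp add: dist_norm R1v R2v nx vector_def algebra_simps power2_eq_square)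
  thus ?thesis by (simp only: sq2[symmetric])
qed

lemma sqrt_prod_ge: "sqrt ((b^2 + c^2) * (a^2 + c^2)) \<ge> \<bar>a\<bar> * \<bar>b\<bar> + c^2"
proof -
  have "(\<bar>a\<bar> * \<bar>b\<bar> + c^2)^2 \<le> (b^2 + c^2) * (a^2 + c^2)"
  proof -
    have "0 \<le> (\<bar>a\<bar> * c - \<bar>b\<bar> * c)^2" by simp
    thus ?thesis by (simp add: power2_eq_square algebra_simps abs_mult_self_eq)
  qed
  thus ?thesis by (metis abs_of_nonneg add_nonneg_nonneg real_sqrt_abs real_sqrt_le_mono zero_le_mult_iff abs_ge_zero zero_le_power2)
qed

lemma alg: fixes a b c :: real shows "sqrt (b^2+c^2) + sqrt (a^2+c^2) + sqrt (a^2+b^2) \<ge> 2 * sqrt (a^2+b^2+c^2)"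
proof -
  define u where "u = sqrt (b^2+c^2)"
  define v where "v = sqrt (a^2+c^2)"
  define w where "w = sqrt (a^2+b^2)"
  have uv: "u * v \<ge> \<bar>a\<bar> * \<bar>b\<bar> + c^2" unfolding u_def v_def
    using sqrt_prod_ge[where a=a and b=b and c=c] by (simp add: real_sqrt_mult)
  have vw: "v * w \<ge> \<bar>b\<bar> * \<bar>c\<bar> + a^2" unfolding w_def v_def
    using sqrt_prod_ge[where a=b and b=c and c=a] by (simp add: real_sqrt_mult add.commute)
  have uw: "u * w \<ge> \<bar>a\<bar> * \<bar>c\<bar> + b^2" unfolding u_def w_def
    using sqrt_prod_ge[where a=a and b=c and c=b] by (simp add: real_sqrt_mult add.commute)
  have u2: "u^2 = b^2+c^2" unfolding u_def by simp
  have v2: "v^2 = a^2+c^2" unfolding v_def by simp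
  have w2: "w^2 = a^2+b^2" unfolding w_def by simp
  have nn: "u \<ge> 0" "v \<ge> 0" "w \<ge> 0" unfolding u_def v_def w_def by auto
  have "(u+v+w)^2 \<ge> 4*(a^2+b^2+c^2)"
  proof -
    have "(u+v+w)^2 = u^2+v^2+w^2 + 2*(u * v) + 2*(v * w) + 2*(u * w)" by (simp add: power2_eq_square algebra_simps)
    moreover have "\<bar>a\<bar> * \<bar>b\<bar> \<ge> 0" "\<bar>b\<bar> * \<bar>c\<bar> \<ge> 0" "\<bar>a\<bar> * \<bar>c\<bar> \<ge> 0" by auto
    ultimately show ?thesis using uv vw uw u2 v2 w2 by (smt (verit) zero_le_power2)
  qed
  hence "sqrt (4*(a^2+b^2+c^2)) \<le> sqrt ((u+v+w)^2)" by (rule real_sqrt_le_mono)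
  hence "2 * sqrt (a^2+b^2+c^2) \<le> sqrt ((u+v+w)^2)" by (simp only: sq2)
  also have "\<dots> = u+v+w" using nn by simp
  finally show ?thesis unfolding u_def v_def w_def .
qed

lemma tri_norm: "dist x (R1 *v x) + dist x (R2 *v x) + dist (R1 *v x) (R2 *v x) \<ge> 4 * norm x"
  using alg[of "x$2" "x$3" "x$1"] unfolding d1 d2 d3 nx by (simp add: add_ac)

lemma tri_sorted:
  fixes g :: "real \<Rightarrow> 'a::metric_space"
  assumes cl: "curve_length g 0 L = ereal Lam" and per: "g L = g 0"
    and o: "0 \<le> a" "a \<le> b" "b \<le> c" "c \<le> L"
  shows "dist (g a) (g b) + dist (g b) (g c) + dist (g c) (g a) \<le> Lam"
proof -
  define t where "t = (\<lambda>i::nat. if i = 0 then 0 else if i = 1 then a else if i = 2 then b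
     else if i = 3 then c else L)"
  have mem: "(t, 4) \<in> {(t, n). t 0 = 0 \<and> t n = L \<and> (\<forall>i<n. t i \<le> t (Suc i))}"
    using o by (auto simp: t_def less_Suc_eq numeral_eq_Suc)
  have "ereal (\<Sum>i<snd (t,4::nat). dist (g (fst (t,4::nat) (Suc i))) (g (fst (t,4::nat) i))) \<le> curve_length g 0 L"
    unfolding curve_length_def by (rule SUP_upper[OF mem])
  hence "(\<Sum>i<4::nat. dist (g (t (Suc i))) (g (t i))) \<le> Lam" using cl by simp
  hence "dist (g a) (g 0) + dist (g b) (g a) + dist (g c) (g b) + dist (g L) (g c) \<le> Lam"
    by (simp add: t_def numeral_eq_Suc lessThan_Suc add_ac)
  moreover have "dist (g c) (g a) \<le> dist (g L) (g c) + dist (g a) (g 0)"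
    using per dist_triangle[of "g c" "g a" "g 0"] by (simp add: dist_commute)
  ultimately show ?thesis by (simp add: dist_commute)
qed

lemma tri_any:
  fixes g :: "real \<Rightarrow> 'a::metric_space"
  assumes cl: "curve_length g 0 L = ereal Lam" and per: "g L = g 0"
    and o: "0 \<le> a" "a \<le> L" "0 \<le> b" "b \<le> L" "0 \<le> c" "c \<le> L"
  shows "dist (g a) (g b) + dist (g b) (g c) + dist (g c) (g a) \<le> Lam"
proof -
  have "a \<le> b \<and> b \<le> c \<or> a \<le> c \<and> c \<le> b \<or> b \<le> a \<and> a \<le> c \<or> b \<le> c \<and> c \<le> a
    \<or> c \<le> a \<and> a \<le> b \<or> c \<le> b \<and> b \<le> a" by linarith
  thus ?thesis
    using tri_sorted[OF cl per, of a b c] tri_sorted[OF cl per, of a c b]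
      tri_sorted[OF cl per, of b a c] tri_sorted[OF cl per, of b c a]
      tri_sorted[OF cl per, of c a b] tri_sorted[OF cl per, of c b a] o
    by (auto simp: dist_commute)
qed

lemma periodic_int:
  fixes g :: "real \<Rightarrow> 'a"
  assumes per: "\<And>t. g (t + L) = g t"
  shows "g (s + of_int k * L) = g s"
proof -
  have nat: "g (s + real n * L) = g s" for s n
  proof (induction n)
    case (Suc n)
    have "g (s + real (Suc n) * L) = g ((s + real n * L) + L)" by (simp add: algebra_simps)
    also have "\<dots> = g s" using per Suc by simp
    finally show ?case .
  qed simp
  show ?thesis
  proof (cases "k \<ge> 0")
    case True
    then obtain n where "k = int n" using nonneg_int_cases by blast
    thus ?thesis using nat by simp
  next
    case False
    define n where "n = nat (-k)"
    have n: "k = - int n" using False unfolding n_def by simp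
    have "g s = g ((s - real n * L) + real n * L)" by simp
    also have "\<dots> = g (s - real n * L)" by (rule nat)
    finally show ?thesis using n by simp
  qed
qed

lemma reduce:
  fixes g :: "real \<Rightarrow> 'a"
  assumes per: "\<And>t. g (t + L) = g t" and L: "L > 0"
  shows "\<exists>s. 0 \<le> s \<and> s \<le> L \<and> g s = g t"
proof -
  define k where "k = floor (t / L)"
  have "of_int k \<le> t / L" "t / L < of_int k + 1" unfolding k_def by linarith+
  hence "of_int k * L \<le> t" "t < (of_int k + 1) * L" using L by (simp_all add: field_simps)
  moreover have "g (t - of_int k * L) = g t"
    using periodic_int[where g=g and L=L, OF per, of "t - of_int k * L" k] by simp
  ultimately show ?thesis by (intro exI[of _ "t - of_int k * L"]) (auto simp: algebra_simps)
qed


theorem lemma3p13: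
  fixes \<gamma> :: "real \<Rightarrow> real^3" and L Lam :: real
  assumes "L > 0"
    and "continuous_on UNIV \<gamma>"
    and "\<And>t. \<gamma> (t + L) = \<gamma> t"
    and "curve_length \<gamma> 0 L = ereal Lam"
    and "0 < Lam"
    and "(\<lambda>x. R1 *v x) ` (\<gamma> ` UNIV) = \<gamma> ` UNIV"
    and "(\<lambda>x. R2 *v x) ` (\<gamma> ` UNIV) = \<gamma> ` UNIV"
    and "(\<lambda>x. R3 *v x) ` (\<gamma> ` UNIV) = \<gamma> ` UNIV"
  shows "\<gamma> ` UNIV \<subseteq> cball 0 (Lam / 4)"
proof
  fix y assume "y \<in> \<gamma> ` UNIV"
  then obtain t where t: "y = \<gamma> t" by auto
  have "R1 *v y \<in> \<gamma> ` UNIV" using assms(6) \<open>y \<in> \<gamma> ` UNIV\<close> by blast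
  then obtain t1 where t1: "R1 *v y = \<gamma> t1" by auto
  have "R2 *v y \<in> \<gamma> ` UNIV" using assms(7) \<open>y \<in> \<gamma> ` UNIV\<close> by blast
  then obtain t2 where t2: "R2 *v y = \<gamma> t2" by auto
  obtain a where a: "0 \<le> a" "a \<le> L" "\<gamma> a = \<gamma> t" using reduce[where g=\<gamma>, OF assms(3) assms(1)] by blast
  obtain b where b: "0 \<le> b" "b \<le> L" "\<gamma> b = \<gamma> t1" using reduce[where g=\<gamma>, OF assms(3) assms(1)] by blast
  obtain c where c: "0 \<le> c" "c \<le> L" "\<gamma> c = \<gamma> t2" using reduce[where g=\<gamma>, OF assms(3) assms(1)] by blast
  have per: "\<gamma> L = \<gamma> 0" using assms(3)[of 0] by simp
  have "dist (\<gamma> a) (\<gamma> b) + dist (\<gamma> b) (\<gamma> c) + dist (\<gamma> c) (\<gamma> a) \<le> Lam"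
    by (rule tri_any[OF assms(4) per]) (use a b c in auto)
  hence "dist y (R1 *v y) + dist (R1 *v y) (R2 *v y) + dist y (R2 *v y) \<le> Lam"
    using a b c t t1 t2 by (simp add: dist_commute)
  hence "4 * norm y \<le> Lam" using tri_norm[of y] by linarith
  thus "y \<in> cball 0 (Lam / 4)" by simp
qed

end
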